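(* Let $n,m\ge 1$, let $R\in\mathbb{R}^{2n\times 2n}$ be symmetric, $C\in\mathbb{R}^{2m\times 2n}$, and $\Sigma\in\mathbb{R}^{2m\times 2m}$ real symplectic. Set $A=\mathbb{J}_{2n}R-\tfrac12 C^{\sharp}C$ and $B=-C^{\sharp}\Sigma$, and define $$\mathcal{C}=(B\; AB\;\cdots\;A^{2n-1}B),\qquad \mathcal{O}=\begin{pmatrix}C\\ CA\\ \vdots\\ CA^{2n-1}\end{pmatrix},$$ $$\tilde{\mathcal{C}}=(B\;(\mathbb{J}_{2n}R)B\;\cdots\;(\mathbb{J}_{2n}R)^{2n-1}B),\qquad \tilde{\mathcal{O}}=\begin{pmatrix}C\\ C(\mathbb{J}_{2n}R)\\ \vdots\\ C(\mathbb{J}_{2n}R)^{2n-1}\end{pmatrix}.$$ Then $\operatorname{Im}\tilde{\mathcal{C}}=\operatorname{Im}\mathcal{C}$ and $\operatorname{Ker}\tilde{\mathcal{O}}=\operatorname{Ker}\mathcal{O}$.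
   Context: $\mathbb{J}_{2k}=\begin{pmatrix}0_{k\times k}& I_k\\ -I_k & 0_{k\times k}\end{pmatrix}$. For a $2r\times 2s$ matrix $X$, $X^{\sharp}=-\mathbb{J}_{2s}X^{\dagger}\mathbb{J}_{2r}$ (for real $X$, $X^{\dagger}=X^{\top}$). A real $2k\times 2k$ matrix $T$ is symplectic if $TT^{\sharp}=T^{\sharp}T=I_{2k}$, equivalently $T^{\top}\mathbb{J}_{2k}T=\mathbb{J}_{2k}$. *)

theory Defs
  imports "Jordan_Normal_Form.Matrix_Kernel"
begin

definition Jmat :: "nat \<Rightarrow> real mat" where
  "Jmat k = four_block_mat (0\<^sub>m k k) (1\<^sub>m k) (- 1\<^sub>m k) (0\<^sub>m k k)"

definition sharp :: "real mat \<Rightarrow> real mat" where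
  "sharp X = - (Jmat (dim_col X div 2) * transpose_mat X * Jmat (dim_row X div 2))"

definition symplectic :: "nat \<Rightarrow> real mat \<Rightarrow> bool" where
  "symplectic k T \<longleftrightarrow> T \<in> carrier_mat (2*k) (2*k) \<and>
     T * sharp T = 1\<^sub>m (2*k) \<and> sharp T * T = 1\<^sub>m (2*k)"

text \<open>Block row (B  AB  ...  A^(N-1) B).\<close>
definition ctrb :: "real mat \<Rightarrow> real mat \<Rightarrow> nat \<Rightarrow> real mat" where
  "ctrb A B N = mat (dim_row B) (N * dim_col B)
     (\<lambda>(i,j). (A ^\<^sub>m (j div dim_col B) * B) $$ (i, j mod dim_col B))"

text \<open>Block column (C; CA; ...; C A^(N-1)).\<close>
definition obsv :: "real mat \<Rightarrow> real mat \<Rightarrow> nat \<Rightarrow> real mat" where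
  "obsv C A N = mat (N * dim_row C) (dim_col C)
     (\<lambda>(i,j). (C * A ^\<^sub>m (i div dim_row C)) $$ (i mod dim_row C, j))"

definition mat_image :: "real mat \<Rightarrow> real vec set" where
  "mat_image M = {M *\<^sub>v x | x. x \<in> carrier_vec (dim_col M)}"

end

theory Submission imports Defs begin
lemma pow_comm: assumes "X \<in> carrier_mat d d" shows "X * X ^\<^sub>m k = X ^\<^sub>m k * X"
proof (induction k)
  case 0 then show ?case using assms by simp
next
  case (Suc k)
  have "X * X ^\<^sub>m Suc k = (X * X ^\<^sub>m k) * X"
    using assms by (simp add: assoc_mult_mat[of X d d "X ^\<^sub>m k" d X d, symmetric])
  also have "\<dots> = X ^\<^sub>m Suc k * X" using Suc by simp
  finally show ?case .
qed

lemma ctrb_dims[simp]: "dim_row (ctrb X B N) = dim_row B" "dim_col (ctrb X B N) = N * dim_col B"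
  by (auto simp: ctrb_def)

lemma ctrb_index: "i < dim_row B \<Longrightarrow> j < N * dim_col B \<Longrightarrow>
   ctrb X B N $$ (i,j) = (X ^\<^sub>m (j div dim_col B) * B) $$ (i, j mod dim_col B)"
  by (simp add: ctrb_def)

lemma ctrb_Suc_comp:
  assumes X: "X \<in> carrier_mat d d" and B: "B \<in> carrier_mat d p" and x: "x \<in> carrier_vec (Suc N * p)" and i: "i < d"
  shows "(ctrb X B (Suc N) *\<^sub>v x) $ i = (B *\<^sub>v vec p (\<lambda>j. x$j)) $ i
     + (X *\<^sub>v (ctrb X B N *\<^sub>v vec (N*p) (\<lambda>j. x$(p+j)))) $ i"
proof -
  have dB: "dim_row B = d" "dim_col B = p" using B by auto
  have cN: "ctrb X B N \<in> carrier_mat d (N*p)" by (rule carrier_matI) (simp_all add: dB)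
  have xt: "vec (N*p) (\<lambda>j. x$(p+j)) \<in> carrier_vec (N*p)" by (rule vec_carrier)
  have dx: "dim_vec x = p + N*p" using carrier_vecD[OF x] by simp
  have "(ctrb X B (Suc N) *\<^sub>v x) $ i = row (ctrb X B (Suc N)) i \<bullet> x"
    using i dB by simp
  also have "\<dots> = (\<Sum>c\<in>{0..<p + N*p}. ctrb X B (Suc N) $$ (i,c) * x$c)"
    unfolding scalar_prod_def dx using i dB by (intro sum.cong refl) simp
  also have "\<dots> = (\<Sum>c\<in>{0..<p}. ctrb X B (Suc N) $$ (i,c) * x$c) + (\<Sum>c\<in>{p..<p + N*p}. ctrb X B (Suc N) $$ (i,c) * x$c)"
    by (rule sum.atLeastLessThan_concat[symmetric]) auto
  also have "(\<Sum>c\<in>{0..<p}. ctrb X B (Suc N) $$ (i,c) * x$c) = (B *\<^sub>v vec p (\<lambda>j. x$j)) $ i"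
  proof -
    have "ctrb X B (Suc N) $$ (i,c) = B $$ (i,c)" if "c < p" for c
    proof -
      have "ctrb X B (Suc N) $$ (i,c) = (X ^\<^sub>m 0 * B) $$ (i, c)"
        using ctrb_index[of i B c "Suc N" X] that i dB by simp
      also have "\<dots> = B $$ (i,c)" using X B by simp
      finally show ?thesis .
    qed
    then show ?thesis using i dB by (simp add: scalar_prod_def)
  qed
  also have "(\<Sum>c\<in>{p..<p + N*p}. ctrb X B (Suc N) $$ (i,c) * x$c) = (\<Sum>c\<in>{0..<N*p}. ctrb X B (Suc N) $$ (i,c+p) * x$(c+p))"
    using sum.shift_bounds_nat_ivl[of "\<lambda>c. ctrb X B (Suc N) $$ (i,c) * x$c" 0 p "N*p"] by (simp add: add.commute)
  also have "\<dots> = ((X * ctrb X B N) *\<^sub>v vec (N*p) (\<lambda>j. x$(p+j))) $ i"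
  proof -
    have "ctrb X B (Suc N) $$ (i,c+p) = (X * ctrb X B N) $$ (i, c)" if c: "c < N*p" for c
    proof -
      have p: "p > 0" using c by (cases p) auto
      have cm: "c mod p < p" using p by simp
      have cd: "(c+p) div p = Suc (c div p)" "(c+p) mod p = c mod p" using p by auto
      have "ctrb X B (Suc N) $$ (i,c+p) = (X ^\<^sub>m (Suc (c div p)) * B) $$ (i, c mod p)"
        using ctrb_index[of i B "c+p" "Suc N" X] c i dB cd by simp
      also have "X ^\<^sub>m (Suc (c div p)) * B = X * (X ^\<^sub>m (c div p) * B)"
        using pow_comm[OF X, of "c div p"] assoc_mult_mat[of X d d "X ^\<^sub>m (c div p)" d B p] X B
        by simp
      also have "(X * (X ^\<^sub>m (c div p) * B)) $$ (i, c mod p) = (X * ctrb X B N) $$ (i, c)"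
      proof -
        have "col (X ^\<^sub>m (c div p) * B) (c mod p) = col (ctrb X B N) c"
        proof (rule eq_vecI)
          fix k assume "k < dim_vec (col (ctrb X B N) c)"
          then have k: "k < d" using dB by simp
          show "col (X ^\<^sub>m (c div p) * B) (c mod p) $ k = col (ctrb X B N) c $ k"
            using ctrb_index[of k B c N X] k c cm dB X by simp
        qed (use dB X in simp)
        then show ?thesis using i c cm dB X by simp
      qed
      finally show ?thesis .
    qed
    then show ?thesis using i dB X by (simp add: scalar_prod_def add.commute)
  qed
  also have "\<dots> = (X *\<^sub>v (ctrb X B N *\<^sub>v vec (N*p) (\<lambda>j. x$(p+j)))) $ i"
    using X cN xt by simp
  finally show ?thesis .
qed
lemma obsv_dims[simp]: "dim_row (obsv C X N) = N * dim_row C" "dim_col (obsv C X N) = dim_col C"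
  by (auto simp: obsv_def)

lemma obsv_index: "i < N * dim_row C \<Longrightarrow> j < dim_col C \<Longrightarrow>
   obsv C X N $$ (i,j) = (C * X ^\<^sub>m (i div dim_row C)) $$ (i mod dim_row C, j)"
  by (simp add: obsv_def)

lemma obsv_Suc_comp1:
  assumes C: "C \<in> carrier_mat r d" and X: "X \<in> carrier_mat d d" and x: "x \<in> carrier_vec d" and i: "i < r"
  shows "(obsv C X (Suc N) *\<^sub>v x) $ i = (C *\<^sub>v x) $ i"
proof -
  have dC: "dim_row C = r" "dim_col C = d" using C by auto
  have dX: "dim_row X = d" "dim_col X = d" using X by auto
  have "row (obsv C X (Suc N)) i = row C i"
  proof (rule eq_vecI)
    fix j assume "j < dim_vec (row C i)"
    then have j: "j < d" using dC by simp
    have "obsv C X (Suc N) $$ (i,j) = (C * X ^\<^sub>m 0) $$ (i, j)"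
      using obsv_index[of i "Suc N" C j X] i j dC by simp
    also have "C * X ^\<^sub>m 0 = C" using dX dC by (simp add: right_mult_one_mat')
    finally show "row (obsv C X (Suc N)) i $ j = row C i $ j" using i j dC by simp
  qed (simp add: dC)
  then show ?thesis using dC i by simp
qed

lemma obsv_Suc_comp2:
  assumes C: "C \<in> carrier_mat r d" and X: "X \<in> carrier_mat d d" and x: "x \<in> carrier_vec d" and i: "i < N*r"
  shows "(obsv C X (Suc N) *\<^sub>v x) $ (r+i) = (obsv C X N *\<^sub>v (X *\<^sub>v x)) $ i"
proof -
  have dC: "dim_row C = r" "dim_col C = d" using C by auto
  have dX: "dim_row X = d" "dim_col X = d" using X by auto
  have r: "r > 0" using i by (cases r) auto
  have im: "i mod r < r" using r by simp
  have rd: "(r+i) div r = Suc (i div r)" "(r+i) mod r = i mod r" using r by auto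
  have oN: "obsv C X N \<in> carrier_mat (N*r) d" by (rule carrier_matI) (simp_all add: dC)
  have "row (obsv C X (Suc N)) (r+i) = row (obsv C X N * X) i"
  proof (rule eq_vecI)
    fix j assume j: "j < dim_vec (row (obsv C X N * X) i)"
    then have jd: "j < d" using dX by simp
    have "row (obsv C X (Suc N)) (r+i) $ j = obsv C X (Suc N) $$ (r+i, j)"
      using i jd dC by simp
    also have "\<dots> = (C * X ^\<^sub>m (Suc (i div r))) $$ (i mod r, j)"
      using obsv_index[of "r+i" "Suc N" C j X] i jd dC rd by simp
    also have "C * X ^\<^sub>m (Suc (i div r)) = (C * X ^\<^sub>m (i div r)) * X"
      using assoc_mult_mat[of C r d "X ^\<^sub>m (i div r)" d X d, symmetric] C X by simp
    also have "((C * X ^\<^sub>m (i div r)) * X) $$ (i mod r, j) = (obsv C X N * X) $$ (i, j)"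
    proof -
      have "row (C * X ^\<^sub>m (i div r)) (i mod r) = row (obsv C X N) i"
      proof (rule eq_vecI)
        fix k assume "k < dim_vec (row (obsv C X N) i)"
        then have k: "k < d" using dC by simp
        show "row (C * X ^\<^sub>m (i div r)) (i mod r) $ k = row (obsv C X N) i $ k"
          using obsv_index[of i N C k X] i k im dC dX by simp
      qed (simp add: dC dX)
      then show ?thesis using i im jd dC dX by simp
    qed
    also have "\<dots> = row (obsv C X N * X) i $ j" using i jd dC dX by simp
    finally show "row (obsv C X (Suc N)) (r+i) $ j = row (obsv C X N * X) i $ j" .
  qed (simp add: dC dX)
  moreover have "(obsv C X (Suc N) *\<^sub>v x) $ (r+i) = row (obsv C X (Suc N)) (r+i) \<bullet> x"
    using i dC by simp
  moreover have "(obsv C X N *\<^sub>v (X *\<^sub>v x)) $ i = ((obsv C X N * X) *\<^sub>v x) $ i"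
    using assoc_mult_mat_vec[OF oN X x] by simp
  moreover have "((obsv C X N * X) *\<^sub>v x) $ i = row (obsv C X N * X) i \<bullet> x"
    using i dC by simp
  ultimately show ?thesis by simp
qed

lemma vec_zero_iff: assumes dv: "dim_vec v = n" shows "v = 0\<^sub>v n \<longleftrightarrow> (\<forall>i<n. v$i = 0)"
proof
  assume "v = 0\<^sub>v n" then show "\<forall>i<n. v$i = 0" by simp
next
  assume "\<forall>i<n. v$i = 0" then show "v = 0\<^sub>v n" using dv by (intro eq_vecI) auto
qed

fun KS :: "real mat \<Rightarrow> real mat \<Rightarrow> nat \<Rightarrow> real vec set" where
  "KS C X 0 = carrier_vec (dim_col C)"
| "KS C X (Suc N) = {x \<in> carrier_vec (dim_col C). C *\<^sub>v x = 0\<^sub>v (dim_row C) \<and> X *\<^sub>v x \<in> KS C X N}"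

lemma obsv_kernel:
  assumes C: "C \<in> carrier_mat r d" and X: "X \<in> carrier_mat d d"
  shows "mat_kernel (obsv C X N) = KS C X N"
proof (induction N)
  case 0
  have "x \<in> mat_kernel (obsv C X 0) \<longleftrightarrow> x \<in> KS C X 0" for x
    unfolding mat_kernel_def KS.simps carrier_vec_def by (auto intro!: eq_vecI)
  then show ?case by blast
next
  case (Suc N)
  have dC: "dim_row C = r" "dim_col C = d" using C by auto
  have dX: "dim_row X = d" "dim_col X = d" using X by auto
  have "x \<in> mat_kernel (obsv C X (Suc N)) \<longleftrightarrow> x \<in> KS C X (Suc N)" for x
  proof (cases "dim_vec x = d")
    case False then show ?thesis unfolding mat_kernel_def KS.simps carrier_vec_def by (simp add: dC)
  next
    case xd: True
    then have x: "x \<in> carrier_vec d" by (rule carrier_vecI)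
    have Xx: "X *\<^sub>v x \<in> carrier_vec d" by (rule carrier_vecI) (simp add: dX)
    have "obsv C X (Suc N) *\<^sub>v x = 0\<^sub>v (Suc N * r) \<longleftrightarrow> (\<forall>c<Suc N * r. (obsv C X (Suc N) *\<^sub>v x) $ c = 0)"
      by (rule vec_zero_iff) (simp add: dC)
    also have "\<dots> \<longleftrightarrow> (\<forall>i<r. (C *\<^sub>v x) $ i = 0) \<and> (\<forall>i<N*r. (obsv C X N *\<^sub>v (X *\<^sub>v x)) $ i = 0)"
    proof
      assume H: "\<forall>c<Suc N * r. (obsv C X (Suc N) *\<^sub>v x) $ c = 0"
      show "(\<forall>i<r. (C *\<^sub>v x) $ i = 0) \<and> (\<forall>i<N*r. (obsv C X N *\<^sub>v (X *\<^sub>v x)) $ i = 0)"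
      proof (intro conjI allI impI)
        fix i assume i: "i < r"
        have "(C *\<^sub>v x) $ i = (obsv C X (Suc N) *\<^sub>v x) $ i" using obsv_Suc_comp1[OF C X x i, of N] by simp
        also have "\<dots> = 0" using H i by simp
        finally show "(C *\<^sub>v x) $ i = 0" .
      next
        fix i assume i: "i < N*r"
        have "(obsv C X N *\<^sub>v (X *\<^sub>v x)) $ i = (obsv C X (Suc N) *\<^sub>v x) $ (r+i)"
          using obsv_Suc_comp2[OF C X x i] by simp
        also have "\<dots> = 0" using H i by simp
        finally show "(obsv C X N *\<^sub>v (X *\<^sub>v x)) $ i = 0" .
      qed
    next
      assume H: "(\<forall>i<r. (C *\<^sub>v x) $ i = 0) \<and> (\<forall>i<N*r. (obsv C X N *\<^sub>v (X *\<^sub>v x)) $ i = 0)"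
      show "\<forall>c<Suc N * r. (obsv C X (Suc N) *\<^sub>v x) $ c = 0"
      proof (intro allI impI)
        fix c assume c: "c < Suc N * r"
        show "(obsv C X (Suc N) *\<^sub>v x) $ c = 0"
        proof (cases "c < r")
          case True then show ?thesis using H obsv_Suc_comp1[OF C X x True, of N] by simp
        next
          case False
          define i where "i = c - r"
          have ci: "c = r + i" using False i_def by simp
          have i: "i < N * r" using c ci by simp
          show ?thesis using H i obsv_Suc_comp2[OF C X x i] ci by simp
        qed
      qed
    qed
    also have "\<dots> \<longleftrightarrow> C *\<^sub>v x = 0\<^sub>v r \<and> obsv C X N *\<^sub>v (X *\<^sub>v x) = 0\<^sub>v (N*r)"
      using vec_zero_iff[of "C *\<^sub>v x" r] vec_zero_iff[of "obsv C X N *\<^sub>v (X *\<^sub>v x)" "N*r"] dC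
      by simp
    finally have E: "obsv C X (Suc N) *\<^sub>v x = 0\<^sub>v (Suc N * r) \<longleftrightarrow> C *\<^sub>v x = 0\<^sub>v r \<and> obsv C X N *\<^sub>v (X *\<^sub>v x) = 0\<^sub>v (N*r)" .
    have K: "X *\<^sub>v x \<in> KS C X N \<longleftrightarrow> obsv C X N *\<^sub>v (X *\<^sub>v x) = 0\<^sub>v (N*r)"
      using Xx unfolding Suc[symmetric] mat_kernel_def by (simp add: dC)
    show ?thesis unfolding mat_kernel_def KS.simps using E K x xd by (simp add: dC)
  qed
  then show ?case by blast
qed

lemma KS_mono:
  assumes H: "\<And>x. x \<in> carrier_vec (dim_col C) \<Longrightarrow> C *\<^sub>v x = 0\<^sub>v (dim_row C) \<Longrightarrow> Y *\<^sub>v x = X *\<^sub>v x"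
  shows "KS C Y N \<subseteq> KS C X N"
proof (induction N)
  case 0 then show ?case by simp
next
  case (Suc N)
  show ?case
  proof
    fix x assume "x \<in> KS C Y (Suc N)"
    then have x: "x \<in> carrier_vec (dim_col C)" "C *\<^sub>v x = 0\<^sub>v (dim_row C)" "Y *\<^sub>v x \<in> KS C Y N" by auto
    then have "X *\<^sub>v x \<in> KS C X N" using H[OF x(1,2)] Suc by auto
    then show "x \<in> KS C X (Suc N)" using x by simp
  qed
qed

fun HS :: "real mat \<Rightarrow> real mat \<Rightarrow> nat \<Rightarrow> real vec set" where
  "HS X B 0 = {0\<^sub>v (dim_row B)}"
| "HS X B (Suc N) = {B *\<^sub>v u + X *\<^sub>v w | u w. u \<in> carrier_vec (dim_col B) \<and> w \<in> HS X B N}"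

lemma HS_dim:
  assumes dX: "dim_row X = dim_row B" shows "v \<in> HS X B N \<Longrightarrow> dim_vec v = dim_row B"
proof (induction N arbitrary: v)
  case 0 then show ?case by simp
next
  case (Suc N) then show ?case using dX by auto
qed

lemma ctrb_image:
  assumes X: "X \<in> carrier_mat d d" and B: "B \<in> carrier_mat d p"
  shows "mat_image (ctrb X B N) = HS X B N"
proof (induction N)
  case 0
  have dB: "dim_row B = d" "dim_col B = p" using B by auto
  have z: "ctrb X B 0 *\<^sub>v x = 0\<^sub>v d" if "dim_vec x = 0" for x
  proof (rule eq_vecI)
    fix i assume "i < dim_vec (0\<^sub>v d :: real vec)"
    then have i: "i < d" by simp
    show "(ctrb X B 0 *\<^sub>v x) $ i = 0\<^sub>v d $ i" using i dB that by (simp add: scalar_prod_def)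
  qed (simp add: dB)
  have "vec 0 (\<lambda>_. 0) \<in> carrier_vec 0" by (rule vec_carrier)
  then show ?case using z unfolding mat_image_def HS.simps carrier_vec_def by (auto simp: dB)
next
  case (Suc N)
  have dB: "dim_row B = d" "dim_col B = p" using B by auto
  have dX: "dim_row X = d" "dim_col X = d" using X by auto
  have cN: "ctrb X B N \<in> carrier_mat d (N*p)" by (rule carrier_matI) (simp_all add: dB)
  have key: "ctrb X B (Suc N) *\<^sub>v x = B *\<^sub>v vec p (\<lambda>j. x$j) + X *\<^sub>v (ctrb X B N *\<^sub>v vec (N*p) (\<lambda>j. x$(p+j)))"
    if x: "x \<in> carrier_vec (Suc N * p)" for x
  proof (rule eq_vecI)
    fix i assume "i < dim_vec (B *\<^sub>v vec p (\<lambda>j. x$j) + X *\<^sub>v (ctrb X B N *\<^sub>v vec (N*p) (\<lambda>j. x$(p+j))))"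
    then have i: "i < d" using dB dX by simp
    show "(ctrb X B (Suc N) *\<^sub>v x) $ i = (B *\<^sub>v vec p (\<lambda>j. x$j) + X *\<^sub>v (ctrb X B N *\<^sub>v vec (N*p) (\<lambda>j. x$(p+j)))) $ i"
      using ctrb_Suc_comp[OF X B x i] i dB dX by simp
  qed (simp add: dB dX)
  show ?case
  proof
    show "mat_image (ctrb X B (Suc N)) \<subseteq> HS X B (Suc N)"
    proof
      fix v assume "v \<in> mat_image (ctrb X B (Suc N))"
      then obtain x where x: "x \<in> carrier_vec (Suc N * p)" and v: "v = ctrb X B (Suc N) *\<^sub>v x"
        unfolding mat_image_def by (auto simp: dB)
      have w: "ctrb X B N *\<^sub>v vec (N*p) (\<lambda>j. x$(p+j)) \<in> HS X B N"
        unfolding Suc[symmetric] mat_image_def by (auto simp: dB)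
      have u: "vec p (\<lambda>j. x$j) \<in> carrier_vec (dim_col B)" unfolding dB by (rule vec_carrier)
      show "v \<in> HS X B (Suc N)" unfolding v key[OF x] HS.simps using u w by blast
    qed
  next
    show "HS X B (Suc N) \<subseteq> mat_image (ctrb X B (Suc N))"
    proof
      fix v assume "v \<in> HS X B (Suc N)"
      then obtain u w where u: "u \<in> carrier_vec p" and w: "w \<in> HS X B N" and v: "v = B *\<^sub>v u + X *\<^sub>v w"
        by (auto simp: dB)
      from w obtain x' where x': "x' \<in> carrier_vec (N*p)" and wx: "w = ctrb X B N *\<^sub>v x'"
        unfolding Suc[symmetric] mat_image_def by (auto simp: dB)
      define x where "x = vec (Suc N * p) (\<lambda>j. if j < p then u$j else x'$(j-p))"
      have x: "x \<in> carrier_vec (Suc N * p)" unfolding x_def by (rule vec_carrier)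
      have du: "dim_vec u = p" by (rule carrier_vecD[OF u])
      have dx': "dim_vec x' = N*p" by (rule carrier_vecD[OF x'])
      have h: "vec p (\<lambda>j. x$j) = u" by (rule eq_vecI) (simp_all add: x_def du)
      have t: "vec (N*p) (\<lambda>j. x$(p+j)) = x'" by (rule eq_vecI) (simp_all add: x_def dx')
      have "v = ctrb X B (Suc N) *\<^sub>v x" unfolding key[OF x] h t v wx ..
      then show "v \<in> mat_image (ctrb X B (Suc N))" unfolding mat_image_def using x by (auto simp: dB)
    qed
  qed
qed

lemma HS_mono:
  assumes X: "X \<in> carrier_mat d d" and Y: "Y \<in> carrier_mat d d" and B: "B \<in> carrier_mat d p"
    and H: "\<And>w. dim_vec w = d \<Longrightarrow> \<exists>u. dim_vec u = p \<and> Y *\<^sub>v w = X *\<^sub>v w + B *\<^sub>v u"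
  shows "HS Y B N \<subseteq> HS X B N"
proof (induction N)
  case 0 then show ?case by simp
next
  case (Suc N)
  have dB: "dim_row B = d" "dim_col B = p" using B by auto
  have dX: "dim_row X = d" "dim_col X = d" using X by auto
  have dY: "dim_row Y = d" "dim_col Y = d" using Y by auto
  show ?case
  proof
    fix v assume "v \<in> HS Y B (Suc N)"
    then obtain u w where u: "u \<in> carrier_vec p" and w: "w \<in> HS Y B N" and v: "v = B *\<^sub>v u + Y *\<^sub>v w"
      unfolding HS.simps dB by blast
    have wX: "w \<in> HS X B N" using w Suc by blast
    have dw: "dim_vec w = d" using HS_dim[of X B, OF _ wX] dB dX by simp
    obtain u' where du': "dim_vec u' = p" and Yw: "Y *\<^sub>v w = X *\<^sub>v w + B *\<^sub>v u'" using H[OF dw] by blast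
    have du: "dim_vec u = p" by (rule carrier_vecD[OF u])
    have "v = B *\<^sub>v (u + u') + X *\<^sub>v w"
    proof (rule eq_vecI)
      fix i assume "i < dim_vec (B *\<^sub>v (u + u') + X *\<^sub>v w)"
      then have i: "i < d" using dB dX by simp
      have "(B *\<^sub>v (u + u')) $ i = (B *\<^sub>v u) $ i + (B *\<^sub>v u') $ i"
      proof -
        have c: "row B i \<in> carrier_vec p" "u \<in> carrier_vec p" "u' \<in> carrier_vec p"
          by (rule carrier_vecI, simp add: dB du du')+
        show ?thesis using i dB du du' scalar_prod_add_distrib[OF c] by simp
      qed
      then show "v $ i = (B *\<^sub>v (u + u') + X *\<^sub>v w) $ i"
        unfolding v Yw using i dB dX du du' by simp
    qed (simp add: v dB dX dY)
    moreover have "u + u' \<in> carrier_vec (dim_col B)" by (rule carrier_vecI) (simp add: du du' dB)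
    ultimately show "v \<in> HS X B (Suc N)" using wX unfolding HS.simps by blast
  qed
qed

lemma ctrl_cond:
  assumes X: "X \<in> carrier_mat d d" and B: "B \<in> carrier_mat d p" and Q: "Q \<in> carrier_mat p d"
    and Y: "Y = X + B * Q" and w: "dim_vec w = d"
  shows "\<exists>u. dim_vec u = p \<and> Y *\<^sub>v w = X *\<^sub>v w + B *\<^sub>v u"
proof -
  have wc: "w \<in> carrier_vec d" using w by (rule carrier_vecI)
  have BQ: "B * Q \<in> carrier_mat d d" using B Q by (rule mult_carrier_mat)
  have "Y *\<^sub>v w = X *\<^sub>v w + (B * Q) *\<^sub>v w" unfolding Y by (rule add_mult_distrib_mat_vec[OF X BQ wc])
  also have "(B * Q) *\<^sub>v w = B *\<^sub>v (Q *\<^sub>v w)" by (rule assoc_mult_mat_vec[OF B Q wc])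
  finally have "Y *\<^sub>v w = X *\<^sub>v w + B *\<^sub>v (Q *\<^sub>v w)" .
  moreover have "dim_vec (Q *\<^sub>v w) = p" using carrier_matD(1)[OF Q] by simp
  ultimately show ?thesis by blast
qed

lemma obs_cond:
  assumes X: "X \<in> carrier_mat d d" and C: "C \<in> carrier_mat r d" and P: "P \<in> carrier_mat d r"
    and Y: "Y = X + P * C" and x: "x \<in> carrier_vec d" and Cx: "C *\<^sub>v x = 0\<^sub>v r"
  shows "Y *\<^sub>v x = X *\<^sub>v x"
proof -
  have PC: "P * C \<in> carrier_mat d d" using P C by (rule mult_carrier_mat)
  have "Y *\<^sub>v x = X *\<^sub>v x + (P * C) *\<^sub>v x" unfolding Y by (rule add_mult_distrib_mat_vec[OF X PC x])
  also have "(P * C) *\<^sub>v x = P *\<^sub>v (C *\<^sub>v x)" by (rule assoc_mult_mat_vec[OF P C x])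
  also have "\<dots> = 0\<^sub>v d" unfolding Cx using carrier_matD[OF P] by (intro eq_vecI) (simp_all add: scalar_prod_def)
  also have "X *\<^sub>v x + 0\<^sub>v d = X *\<^sub>v x" by (rule right_zero_vec) (rule mult_mat_vec_carrier[OF X x])
  finally show ?thesis .
qed

lemma Jmat_carrier: "Jmat k \<in> carrier_mat (2*k) (2*k)"
proof -
  have "Jmat k \<in> carrier_mat (k+k) (k+k)" unfolding Jmat_def
    by (rule four_block_carrier_mat) auto
  then show ?thesis by (simp add: mult_2)
qed

theorem lemma1:
  fixes n m :: nat and R C \<Sigma> :: "real mat"
  assumes "n \<ge> 1" and "m \<ge> 1"
    and "R \<in> carrier_mat (2*n) (2*n)" and "transpose_mat R = R"
    and "C \<in> carrier_mat (2*m) (2*n)"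
    and "symplectic m \<Sigma>"
  shows "let A = Jmat n * R - (1/2) \<cdot>\<^sub>m (sharp C * C);
             B = - (sharp C * \<Sigma>)
         in mat_image (ctrb (Jmat n * R) B (2*n)) = mat_image (ctrb A B (2*n))
          \<and> mat_kernel (obsv C (Jmat n * R) (2*n)) = mat_kernel (obsv C A (2*n))"
proof -
  note Rc = assms(3) and Cc = assms(5)
  have Sg: "\<Sigma> \<in> carrier_mat (2*m) (2*m)" and SS: "\<Sigma> * sharp \<Sigma> = 1\<^sub>m (2*m)"
    using assms(6) unfolding symplectic_def by auto
  define F where "F = Jmat n * R"
  define S where "S = sharp C"
  define A where "A = F - (1/2) \<cdot>\<^sub>m (S * C)"
  define B where "B = - (S * \<Sigma>)"
  define Q where "Q = (- (1/2::real)) \<cdot>\<^sub>m (sharp \<Sigma> * C)"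
  define P where "P = (1/2::real) \<cdot>\<^sub>m S"
  have dC: "dim_row C = 2*m" "dim_col C = 2*n" using Cc by auto
  have dSg: "dim_row \<Sigma> = 2*m" "dim_col \<Sigma> = 2*m" using Sg by auto
  have Fc: "F \<in> carrier_mat (2*n) (2*n)" unfolding F_def using Jmat_carrier Rc by (rule mult_carrier_mat)
  have Sc: "S \<in> carrier_mat (2*n) (2*m)"
  proof -
    have "Jmat n * transpose_mat C * Jmat m \<in> carrier_mat (2*n) (2*m)"
      using Jmat_carrier[of n] Jmat_carrier[of m] Cc by (metis mult_carrier_mat transpose_carrier_mat)
    then show ?thesis unfolding S_def sharp_def dC by simp
  qed
  have Ssc: "sharp \<Sigma> \<in> carrier_mat (2*m) (2*m)"
  proof -
    have "Jmat m * transpose_mat \<Sigma> * Jmat m \<in> carrier_mat (2*m) (2*m)"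
      using Jmat_carrier[of m] Sg by (metis mult_carrier_mat transpose_carrier_mat)
    then show ?thesis unfolding sharp_def dSg by simp
  qed
  have SCc: "S * C \<in> carrier_mat (2*n) (2*n)" using Sc Cc by (rule mult_carrier_mat)
  have Kc: "(1/2::real) \<cdot>\<^sub>m (S * C) \<in> carrier_mat (2*n) (2*n)" using SCc by (rule smult_carrier_mat)
  have Ac: "A \<in> carrier_mat (2*n) (2*n)" unfolding A_def using Kc by (rule minus_carrier_mat)
  have SSg: "S * \<Sigma> \<in> carrier_mat (2*n) (2*m)" using Sc Sg by (rule mult_carrier_mat)
  have Bc: "B \<in> carrier_mat (2*n) (2*m)" unfolding B_def using SSg by simp
  have SgC: "sharp \<Sigma> * C \<in> carrier_mat (2*m) (2*n)" using Ssc Cc by (rule mult_carrier_mat)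
  have Qc: "Q \<in> carrier_mat (2*m) (2*n)" unfolding Q_def using SgC by (rule smult_carrier_mat)
  have Pc: "P \<in> carrier_mat (2*n) (2*m)" unfolding P_def using Sc by (rule smult_carrier_mat)
  have mQc: "- Q \<in> carrier_mat (2*m) (2*n)" using Qc by simp
  have mPc: "- P \<in> carrier_mat (2*n) (2*m)" using Pc by simp
  have dS: "dim_row S = 2*n" "dim_col S = 2*m" using Sc by auto
  have dQ: "dim_row Q = 2*m" "dim_col Q = 2*n" using Qc by auto
  have dP: "dim_row P = 2*n" "dim_col P = 2*m" using Pc by auto
  have dB: "dim_row B = 2*n" "dim_col B = 2*m" using Bc by auto
  have dF: "dim_row F = 2*n" "dim_col F = 2*n" using Fc by auto
  have SgSC: "\<Sigma> * (sharp \<Sigma> * C) = C"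
  proof -
    have "\<Sigma> * (sharp \<Sigma> * C) = (\<Sigma> * sharp \<Sigma>) * C" by (rule assoc_mult_mat[OF Sg Ssc Cc, symmetric])
    also have "\<dots> = C" unfolding SS using Cc by (rule left_mult_one_mat)
    finally show ?thesis .
  qed
  have BQ: "B * Q = (1/2::real) \<cdot>\<^sub>m (S * C)"
  proof -
    have "B * Q = - ((S * \<Sigma>) * Q)" unfolding B_def
      by (rule uminus_mult_left_mat) (simp add: dSg dQ)
    also have "(S * \<Sigma>) * Q = (- (1/2::real)) \<cdot>\<^sub>m ((S * \<Sigma>) * (sharp \<Sigma> * C))"
      unfolding Q_def by (rule mult_smult_distrib[OF SSg SgC])
    also have "(S * \<Sigma>) * (sharp \<Sigma> * C) = S * (\<Sigma> * (sharp \<Sigma> * C))"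
      by (rule assoc_mult_mat[OF Sc Sg SgC])
    also have "\<dots> = S * C" unfolding SgSC ..
    finally show ?thesis by (intro eq_matI) (simp_all add: dS dC)
  qed
  have PC: "P * C = (1/2::real) \<cdot>\<^sub>m (S * C)" unfolding P_def by (rule mult_smult_assoc_mat[OF Sc Cc])
  have M1: "F = A + B * Q" unfolding BQ A_def by (intro eq_matI) (simp_all add: dS dC dF)
  have M2: "A = F + B * (- Q)"
  proof -
    have "B * (- Q) = - (B * Q)" by (rule uminus_mult_right_mat) (simp add: dB dQ)
    then show ?thesis unfolding BQ A_def by (intro eq_matI) (simp_all add: dS dC dF)
  qed
  have M3: "F = A + P * C" unfolding PC A_def by (intro eq_matI) (simp_all add: dS dC dF)
  have M4: "A = F + (- P) * C"
  proof -
    have "(- P) * C = - (P * C)" by (rule uminus_mult_left_mat) (simp add: dP dC)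
    then show ?thesis unfolding PC A_def by (intro eq_matI) (simp_all add: dS dC dF)
  qed
  have I: "mat_image (ctrb F B (2*n)) = mat_image (ctrb A B (2*n))"
  proof -
    have "HS F B (2*n) \<subseteq> HS A B (2*n)"
      by (rule HS_mono[OF Ac Fc Bc]) (rule ctrl_cond[OF Ac Bc Qc M1])
    moreover have "HS A B (2*n) \<subseteq> HS F B (2*n)"
      by (rule HS_mono[OF Fc Ac Bc]) (rule ctrl_cond[OF Fc Bc mQc M2])
    ultimately show ?thesis unfolding ctrb_image[OF Fc Bc] ctrb_image[OF Ac Bc] by blast
  qed
  have K: "mat_kernel (obsv C F (2*n)) = mat_kernel (obsv C A (2*n))"
  proof -
    have "KS C F (2*n) \<subseteq> KS C A (2*n)"
      by (rule KS_mono) (rule obs_cond[OF Ac Cc Pc M3], simp_all add: dC)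
    moreover have "KS C A (2*n) \<subseteq> KS C F (2*n)"
      by (rule KS_mono) (rule obs_cond[OF Fc Cc mPc M4], simp_all add: dC)
    ultimately show ?thesis unfolding obsv_kernel[OF Cc Fc] obsv_kernel[OF Cc Ac] by blast
  qed
  show ?thesis unfolding Let_def using I K unfolding F_def A_def B_def S_def by simp
qed
end
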